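(* Let $A$ be an infinite set and let $I$ be a set. Let $\mathcal{B}\subseteq\Omega(A)^{I}$ be a subalgebra of the direct power $\Omega(A)^{I}$. Then there is a filter $F$ on the partition lattice $\Pi(I)$ such that for every $f\in A^{I}$, we have $f\in\mathcal{B}$ if and only if $\Pi(f)\in F$.
   Context: For each $a\in A$ let $\hat{a}$ be a constant symbol, and for each $n\geq1$ and each function $f:A^{n}\to A$ let $\hat{f}$ be an $n$-ary operation symbol. $\Omega(A)$ is the algebra with universe $A$ in this signature in which $\hat{a}$ is interpreted as $a$ and $\hat{f}$ is interpreted as $f$ (so every element is a fundamental constant and every finitary function on $A$ is a fundamental operation). $\Pi(I)$ is the lattice of partitions of $I$ (partitions have nonempty blocks), ordered so that $P\preceq Q$ means $P$ refines $Q$; $P\wedge Q$ is the common refinement. For a function $f:I\to X$, $\Pi(f)=\{f^{-1}(\{x\}) : x\in X\}\setminus\{\emptyset\}$ is the partition of $I$ into the nonempty fibers of $f$. *)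

theory Defs
  imports "HOL-Library.FuncSet"
begin

text \<open>An n-ary operation f from A^n to A is
represented by a function on lists, of which only the values on lists of length n
with entries in A matter; every n-ary operation on A arises this way.\<close>

definition subalgebra_Omega_pow :: "'a set \<Rightarrow> 'i set \<Rightarrow> ('i \<Rightarrow> 'a) set \<Rightarrow> bool" where
  "subalgebra_Omega_pow A I B \<longleftrightarrow>
     B \<subseteq> (I \<rightarrow>\<^sub>E A) \<and>
     (\<forall>a\<in>A. (\<lambda>i\<in>I. a) \<in> B) \<and>
     (\<forall>n::nat. n \<ge> 1 \<longrightarrow>
        (\<forall>f :: 'a list \<Rightarrow> 'a. (\<forall>xs. length xs = n \<and> set xs \<subseteq> A \<longrightarrow> f xs \<in> A) \<longrightarrow>
          (\<forall>hs. length hs = n \<and> set hs \<subseteq> B \<longrightarrow> (\<lambda>i\<in>I. f (map (\<lambda>h. h i) hs)) \<in> B)))"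

definition is_partition :: "'i set \<Rightarrow> 'i set set \<Rightarrow> bool" where
  "is_partition I P \<longleftrightarrow> \<Union>P = I \<and> {} \<notin> P \<and> (\<forall>p\<in>P. \<forall>q\<in>P. p \<noteq> q \<longrightarrow> p \<inter> q = {})"

definition partitions :: "'i set \<Rightarrow> 'i set set set" where
  "partitions I = {P. is_partition I P}"

definition refines :: "'i set set \<Rightarrow> 'i set set \<Rightarrow> bool" where
  "refines P Q \<longleftrightarrow> (\<forall>p\<in>P. \<exists>q\<in>Q. p \<subseteq> q)"

definition part_meet :: "'i set set \<Rightarrow> 'i set set \<Rightarrow> 'i set set" where
  "part_meet P Q = {p \<inter> q | p q. p \<in> P \<and> q \<in> Q \<and> p \<inter> q \<noteq> {}}"

definition is_partition_filter :: "'i set \<Rightarrow> 'i set set set \<Rightarrow> bool" where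
  "is_partition_filter I F \<longleftrightarrow>
     F \<subseteq> partitions I \<and> F \<noteq> {} \<and>
     (\<forall>P\<in>F. \<forall>Q\<in>partitions I. refines P Q \<longrightarrow> Q \<in> F) \<and>
     (\<forall>P\<in>F. \<forall>Q\<in>F. part_meet P Q \<in> F)"

definition kernel_partition :: "'i set \<Rightarrow> ('i \<Rightarrow> 'a) \<Rightarrow> 'i set set" where
  "kernel_partition I f = {{i\<in>I. f i = x} | x. x \<in> f ` I}"

end

theory Submission
  imports Defs
begin

unbundle cardinal_syntax

lemma kp_partition: "is_partition I (kernel_partition I f)"
  unfolding is_partition_def kernel_partition_def by auto

lemma refines_trans: "refines P Q \<Longrightarrow> refines Q R \<Longrightarrow> refines P R"
  unfolding refines_def by (meson order_trans)

lemma refines_refl: "refines P P"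
  unfolding refines_def by auto

lemma meet_partition:
  assumes "is_partition I P" "is_partition I Q"
  shows "is_partition I (part_meet P Q)"
proof -
  have UP: "\<Union>P = I" and UQ: "\<Union>Q = I" using assms unfolding is_partition_def by auto
  have DP: "\<And>p p'. p \<in> P \<Longrightarrow> p' \<in> P \<Longrightarrow> p \<noteq> p' \<Longrightarrow> p \<inter> p' = {}"
    using assms(1) unfolding is_partition_def by auto
  have DQ: "\<And>p p'. p \<in> Q \<Longrightarrow> p' \<in> Q \<Longrightarrow> p \<noteq> p' \<Longrightarrow> p \<inter> p' = {}"
    using assms(2) unfolding is_partition_def by auto
  have mem: "a \<in> part_meet P Q \<longleftrightarrow> (\<exists>p q. a = p \<inter> q \<and> p \<in> P \<and> q \<in> Q \<and> p \<inter> q \<noteq> {})" for a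
    unfolding part_meet_def by simp
  have U1: "\<Union>(part_meet P Q) \<subseteq> I"
  proof
    fix x assume "x \<in> \<Union>(part_meet P Q)"
    then obtain a where "a \<in> part_meet P Q" "x \<in> a" by auto
    then obtain p q where "a = p \<inter> q" "p \<in> P" using mem by auto
    then show "x \<in> I" using UP \<open>x \<in> a\<close> by auto
  qed
  have U2: "I \<subseteq> \<Union>(part_meet P Q)"
  proof
    fix x assume x: "x \<in> I"
    then obtain p where p: "p \<in> P" "x \<in> p" using UP by auto
    obtain q where q: "q \<in> Q" "x \<in> q" using UQ x by auto
    have "p \<inter> q \<in> part_meet P Q" using mem p q by auto
    then show "x \<in> \<Union>(part_meet P Q)" using p q by auto
  qed
  have D: "\<forall>a\<in>part_meet P Q. \<forall>b\<in>part_meet P Q. a \<noteq> b \<longrightarrow> a \<inter> b = {}"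
  proof (intro ballI impI)
    fix a b assume a: "a \<in> part_meet P Q" and b: "b \<in> part_meet P Q" and ab: "a \<noteq> b"
    obtain p q where 1: "a = p \<inter> q" "p \<in> P" "q \<in> Q" using a mem by auto
    obtain p' q' where 2: "b = p' \<inter> q'" "p' \<in> P" "q' \<in> Q" using b mem by auto
    have "p \<noteq> p' \<or> q \<noteq> q'" using 1(1) 2(1) ab by blast
    then have "p \<inter> p' = {} \<or> q \<inter> q' = {}" using DP[OF 1(2) 2(2)] DQ[OF 1(3) 2(3)] by blast
    then show "a \<inter> b = {}" using 1 2 by auto
  qed
  have E: "{} \<notin> part_meet P Q" using mem by auto
  show ?thesis unfolding is_partition_def using U1 U2 D E by auto
qed

lemma kp_block: "i \<in> I \<Longrightarrow> {j\<in>I. f j = f i} \<in> kernel_partition I f"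
  unfolding kernel_partition_def by auto

lemma refines_kp_same:
  assumes "refines (kernel_partition I f) (kernel_partition I g)" "i \<in> I" "j \<in> I" "f i = f j"
  shows "g i = g j"
proof -
  obtain q where q: "q \<in> kernel_partition I g" "{k\<in>I. f k = f i} \<subseteq> q"
    using assms(1) kp_block[OF assms(2), of f] unfolding refines_def by blast
  then obtain x where "q = {k\<in>I. g k = x}" unfolding kernel_partition_def by auto
  with q assms show ?thesis by auto
qed

lemma factor:
  assumes sub: "subalgebra_Omega_pow A I B" and f: "f \<in> B" and g: "g \<in> I \<rightarrow>\<^sub>E A"
    and r: "refines (kernel_partition I f) (kernel_partition I g)"
  shows "g \<in> B"
proof -
  define h where "h y = (if \<exists>i\<in>I. f i = y then g (SOME i. i\<in>I \<and> f i = y) else y)" for y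
  have hA: "h y \<in> A" if "y \<in> A" for y
  proof (cases "\<exists>i\<in>I. f i = y")
    case True
    then have ex: "\<exists>i. i\<in>I \<and> f i = y" by blast
    have "(SOME i. i\<in>I \<and> f i = y) \<in> I" using someI_ex[OF ex] by blast
    then have "g (SOME i. i\<in>I \<and> f i = y) \<in> A" by (rule PiE_mem[OF g])
    then show ?thesis using True unfolding h_def by simp
  next
    case False then show ?thesis using that unfolding h_def by simp
  qed
  have hf: "h (f i) = g i" if i: "i \<in> I" for i
  proof -
    have ex: "\<exists>j. j\<in>I \<and> f j = f i" using i by blast
    define j where "j = (SOME j. j\<in>I \<and> f j = f i)"
    have j: "j \<in> I \<and> f j = f i" unfolding j_def by (rule someI_ex[OF ex])
    then have "g j = g i" using refines_kp_same[OF r] i by blast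
    moreover have "h (f i) = g j" using i unfolding h_def j_def by auto
    ultimately show ?thesis by simp
  qed
  define op where "op xs = h (hd xs)" for xs
  have "\<forall>xs. length xs = 1 \<and> set xs \<subseteq> A \<longrightarrow> op xs \<in> A"
  proof (intro allI impI)
    fix xs :: "'a list" assume a: "length xs = 1 \<and> set xs \<subseteq> A"
    then obtain x where "xs = [x]" by (metis One_nat_def length_0_conv length_Suc_conv)
    with a have "xs = [x]" "x \<in> A" by auto
    then show "op xs \<in> A" using hA unfolding op_def by simp
  qed
  moreover have "length [f] = 1 \<and> set [f] \<subseteq> B" using f by simp
  moreover have "\<forall>n::nat. n \<ge> 1 \<longrightarrow>
        (\<forall>f :: 'a list \<Rightarrow> 'a. (\<forall>xs. length xs = n \<and> set xs \<subseteq> A \<longrightarrow> f xs \<in> A) \<longrightarrow>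
          (\<forall>hs. length hs = n \<and> set hs \<subseteq> B \<longrightarrow> (\<lambda>i\<in>I. f (map (\<lambda>h. h i) hs)) \<in> B))"
    using sub unfolding subalgebra_Omega_pow_def by blast
  moreover have "(1::nat) \<ge> 1" by simp
  ultimately have "(\<lambda>i\<in>I. op (map (\<lambda>h. h i) [f])) \<in> B" by blast
  moreover have "(\<lambda>i\<in>I. op (map (\<lambda>h. h i) [f])) = g"
  proof
    fix i show "(\<lambda>i\<in>I. op (map (\<lambda>h. h i) [f])) i = g i"
      using g hf unfolding op_def by (cases "i \<in> I") (auto simp: PiE_def extensional_def)
  qed
  ultimately show ?thesis by simp
qed


lemma pairing:
  assumes inf: "infinite A" and sub: "subalgebra_Omega_pow A I B" and f: "f \<in> B" and g: "g \<in> B"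
  shows "\<exists>k\<in>B. \<forall>i\<in>I. \<forall>j\<in>I. k i = k j \<longrightarrow> f i = f j \<and> g i = g j"
proof -
  have "|A \<times> A| \<le>o |A|" by (rule ordIso_imp_ordLeq[OF card_of_Times_same_infinite[OF inf]])
  then have "\<exists>e. inj_on e (A \<times> A) \<and> e ` (A \<times> A) \<subseteq> A" by (simp only: card_of_ordLeq[symmetric])
  then obtain e where e: "inj_on e (A \<times> A)" "e ` (A \<times> A) \<subseteq> A" by blast
  have BE: "B \<subseteq> I \<rightarrow>\<^sub>E A" using sub unfolding subalgebra_Omega_pow_def by blast
  have fA: "f \<in> I \<rightarrow>\<^sub>E A" and gA: "g \<in> I \<rightarrow>\<^sub>E A" using BE f g by blast+
  define op where "op xs = e (xs!0, xs!1)" for xs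
  have "\<forall>xs. length xs = 2 \<and> set xs \<subseteq> A \<longrightarrow> op xs \<in> A"
  proof (intro allI impI)
    fix xs :: "'a list" assume a: "length xs = 2 \<and> set xs \<subseteq> A"
    then have "xs!0 \<in> set xs" "xs!1 \<in> set xs" by auto
    then have "(xs!0, xs!1) \<in> A \<times> A" using a by blast
    then show "op xs \<in> A" using e(2) unfolding op_def by blast
  qed
  moreover have "length [f,g] = 2 \<and> set [f,g] \<subseteq> B" using f g by auto
  moreover have "\<forall>n::nat. n \<ge> 1 \<longrightarrow>
        (\<forall>f :: 'a list \<Rightarrow> 'a. (\<forall>xs. length xs = n \<and> set xs \<subseteq> A \<longrightarrow> f xs \<in> A) \<longrightarrow>
          (\<forall>hs. length hs = n \<and> set hs \<subseteq> B \<longrightarrow> (\<lambda>i\<in>I. f (map (\<lambda>h. h i) hs)) \<in> B))"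
    using sub unfolding subalgebra_Omega_pow_def by blast
  moreover have "(2::nat) \<ge> 1" by simp
  ultimately have kB: "(\<lambda>i\<in>I. op (map (\<lambda>h. h i) [f,g])) \<in> B" by blast
  show ?thesis
  proof (rule bexI[OF _ kB], intro ballI impI)
    fix i j assume ij: "i \<in> I" "j \<in> I" and eq: "(\<lambda>i\<in>I. op (map (\<lambda>h. h i) [f,g])) i = (\<lambda>i\<in>I. op (map (\<lambda>h. h i) [f,g])) j"
    then have "e (f i, g i) = e (f j, g j)" unfolding op_def by simp
    moreover have "f i \<in> A" "g i \<in> A" "f j \<in> A" "g j \<in> A"
      using PiE_mem[OF fA] PiE_mem[OF gA] ij by blast+
    ultimately have "(f i, g i) = (f j, g j)" using e(1) unfolding inj_on_def by blast
    then show "f i = f j \<and> g i = g j" by simp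
  qed
qed

lemma refines_meet:
  assumes k: "\<forall>i\<in>I. \<forall>j\<in>I. k i = k j \<longrightarrow> f i = f j \<and> g i = g j"
    and rf: "refines (kernel_partition I f) P" and rg: "refines (kernel_partition I g) Q"
  shows "refines (kernel_partition I k) (part_meet P Q)"
  unfolding refines_def
proof
  fix b assume "b \<in> kernel_partition I k"
  then obtain i where i: "i \<in> I" and b: "b = {j\<in>I. k j = k i}" unfolding kernel_partition_def by auto
  obtain p where p: "p \<in> P" "{j\<in>I. f j = f i} \<subseteq> p" using rf kp_block[OF i, of f] unfolding refines_def by blast
  obtain q where q: "q \<in> Q" "{j\<in>I. g j = g i} \<subseteq> q" using rg kp_block[OF i, of g] unfolding refines_def by blast
  have "i \<in> p \<inter> q" using p q i by auto
  then have "p \<inter> q \<in> part_meet P Q" using p q unfolding part_meet_def by blast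
  moreover have "b \<subseteq> p \<inter> q" using b p q k i by fastforce
  ultimately show "\<exists>c\<in>part_meet P Q. b \<subseteq> c" by blast
qed

lemma kp_in_F: "f \<in> B \<Longrightarrow> kernel_partition I f \<in> {P \<in> partitions I. \<exists>f\<in>B. refines (kernel_partition I f) P}"
  unfolding partitions_def using kp_partition[of I f] refines_refl[of "kernel_partition I f"] by blast

theorem mainTheorem1:
  fixes A :: "'a set" and I :: "'i set" and B :: "('i \<Rightarrow> 'a) set"
  assumes "infinite A"
    and "subalgebra_Omega_pow A I B"
  shows "\<exists>F. is_partition_filter I F \<and>
             (\<forall>f\<in>I \<rightarrow>\<^sub>E A. f \<in> B \<longleftrightarrow> kernel_partition I f \<in> F)"
proof -
  define F where "F = {P \<in> partitions I. \<exists>f\<in>B. refines (kernel_partition I f) P}"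
  obtain a where "a \<in> A" using assms(1) by (metis ex_in_conv finite.emptyI)
  then have "(\<lambda>i\<in>I. a) \<in> B" using assms(2) unfolding subalgebra_Omega_pow_def by blast
  then have ne: "F \<noteq> {}" using kp_in_F unfolding F_def by blast
  have sub: "F \<subseteq> partitions I" unfolding F_def by blast
  have up: "\<forall>P\<in>F. \<forall>Q\<in>partitions I. refines P Q \<longrightarrow> Q \<in> F"
  proof (intro ballI impI)
    fix P Q assume P: "P \<in> F" and Q: "Q \<in> partitions I" and r: "refines P Q"
    from P obtain f where "f \<in> B" "refines (kernel_partition I f) P" unfolding F_def by blast
    then have "refines (kernel_partition I f) Q" using refines_trans r by blast
    with Q \<open>f \<in> B\<close> show "Q \<in> F" unfolding F_def by blast
  qed
  have meet: "\<forall>P\<in>F. \<forall>Q\<in>F. part_meet P Q \<in> F"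
  proof (intro ballI)
    fix P Q assume P: "P \<in> F" and Q: "Q \<in> F"
    then obtain f g where f: "f \<in> B" "refines (kernel_partition I f) P"
      and g: "g \<in> B" "refines (kernel_partition I g) Q" unfolding F_def by blast
    obtain k where k: "k \<in> B" "\<forall>i\<in>I. \<forall>j\<in>I. k i = k j \<longrightarrow> f i = f j \<and> g i = g j"
      using pairing[OF assms f(1) g(1)] by blast
    have "is_partition I P" "is_partition I Q" using P Q unfolding F_def partitions_def by auto
    then have mp: "part_meet P Q \<in> partitions I"
      using meet_partition unfolding partitions_def by blast
    have "refines (kernel_partition I k) (part_meet P Q)" by (rule refines_meet[OF k(2) f(2) g(2)])
    then show "part_meet P Q \<in> F" using mp k(1) unfolding F_def by blast
  qed
  have filt: "is_partition_filter I F"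
    unfolding is_partition_filter_def using sub ne up meet by blast
  have "\<forall>f\<in>I \<rightarrow>\<^sub>E A. f \<in> B \<longleftrightarrow> kernel_partition I f \<in> F"
  proof (intro ballI iffI)
    fix f assume "f \<in> B" then show "kernel_partition I f \<in> F"
      unfolding F_def by (rule kp_in_F)
  next
    fix f assume f: "f \<in> I \<rightarrow>\<^sub>E A" and "kernel_partition I f \<in> F"
    then obtain g where "g \<in> B" "refines (kernel_partition I g) (kernel_partition I f)"
      unfolding F_def by blast
    then show "f \<in> B" using factor[OF assms(2) _ f] by blast
  qed
  with filt show ?thesis by blast
qed

end
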